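(* If $G$ is a quasitopological group, then $G$ and $\tau(G)$ have exactly the same open subgroups. In particular, for any based space $X$, $\pi_1^{qtop}(X)$ and $\pi_1^{\tau}(X)$ have the same open subgroups.
   Context: A quasitopological group is a group with a topology in which inversion is continuous and multiplication is separately continuous in each variable. $F_M(S)$ is the free (Markov) topological group on a space $S$. For a group with topology $G$, $\tau(G)$ is $G$ with the quotient topology with respect to the multiplication epimorphism $m_G:F_M(G)\to G$ sending each generator $g$ to $g$. For a based space $X$, $\pi_1^{qtop}(X)$ is $\pi_1(X)$ with the quotient topology from the based loop space $\Omega(X)$ (compact-open topology) via $\alpha\mapsto[\alpha]$; it is a quasitopological group. $\pi_1^{\tau}(X)=\tau(\pi_1^{qtop}(X))$. *)

theory Defs
  imports "HOL-Analysis.Analysis" "HOL-Algebra.Group"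
begin

text \<open>Quotient topology on the set Y induced by f from the space X: U is open iff
  U is a subset of Y and its preimage is open in X.  (This family is already a topology.)\<close>
definition quot_top :: "'a topology \<Rightarrow> ('a \<Rightarrow> 'b) \<Rightarrow> 'b set \<Rightarrow> 'b topology" where
  "quot_top X f Y = topology_generated_by
      {U. U \<subseteq> Y \<and> openin X {x \<in> topspace X. f x \<in> U}}"

definition quasitopological_group :: "('g, 'm) monoid_scheme \<Rightarrow> 'g topology \<Rightarrow> bool" where
  "quasitopological_group G T \<longleftrightarrow> group G \<and> topspace T = carrier G \<and>
     continuous_map T T (\<lambda>x. inv\<^bsub>G\<^esub> x) \<and>
     (\<forall>g \<in> carrier G. continuous_map T T (\<lambda>x. g \<otimes>\<^bsub>G\<^esub> x) \<and>
                      continuous_map T T (\<lambda>x. x \<otimes>\<^bsub>G\<^esub> g))"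

definition group_topology :: "('g, 'm) monoid_scheme \<Rightarrow> 'g topology \<Rightarrow> bool" where
  "group_topology G T \<longleftrightarrow> topspace T = carrier G \<and>
     continuous_map (prod_topology T T) T (\<lambda>p. fst p \<otimes>\<^bsub>G\<^esub> snd p) \<and>
     continuous_map T T (\<lambda>x. inv\<^bsub>G\<^esub> x)"

text \<open>A letter (x, True) stands for the generator x, (x, False) for its inverse.\<close>
definition reduced_word :: "('a \<times> bool) list \<Rightarrow> bool" where
  "reduced_word w \<longleftrightarrow> (\<forall>i. Suc i < length w \<longrightarrow>
      \<not> (fst (w ! i) = fst (w ! Suc i) \<and> snd (w ! i) \<noteq> snd (w ! Suc i)))"

fun red_cons :: "'a \<times> bool \<Rightarrow> ('a \<times> bool) list \<Rightarrow> ('a \<times> bool) list" where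
  "red_cons l [] = [l]"
| "red_cons l (m # ys) =
     (if fst l = fst m \<and> snd l \<noteq> snd m then ys else l # m # ys)"

definition free_grp :: "'a set \<Rightarrow> ('a \<times> bool) list monoid" where
  "free_grp S = \<lparr> carrier = {w. reduced_word w \<and> fst ` set w \<subseteq> S},
                  mult = (\<lambda>u v. foldr red_cons u v),
                  one = [] \<rparr>"

text \<open>The free (Markov) topological group F_M(X): the free group on the points of X with
  the finest group topology making the inclusion of generators continuous.\<close>
definition free_top :: "'a topology \<Rightarrow> ('a \<times> bool) list topology" where
  "free_top X = topology_generated_by
     (\<Union> {Collect (openin T) | T. group_topology (free_grp (topspace X)) T \<and>
                               continuous_map X T (\<lambda>s. [(s, True)])})"

definition mult_epi :: "('g, 'm) monoid_scheme \<Rightarrow> ('g \<times> bool) list \<Rightarrow> 'g" where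
  "mult_epi G w = foldr (\<lambda>l acc. (if snd l then fst l else inv\<^bsub>G\<^esub> (fst l)) \<otimes>\<^bsub>G\<^esub> acc) w \<one>\<^bsub>G\<^esub>"

definition tau_top :: "('g, 'm) monoid_scheme \<Rightarrow> 'g topology \<Rightarrow> 'g topology" where
  "tau_top G T = quot_top (free_top T) (mult_epi G) (carrier G)"

definition loop_space :: "'a topology \<Rightarrow> 'a \<Rightarrow> (real \<Rightarrow> 'a) set" where
  "loop_space X x0 = {g. pathin X g \<and> g 0 = x0 \<and> g 1 = x0}"

definition loop_top :: "'a topology \<Rightarrow> 'a \<Rightarrow> (real \<Rightarrow> 'a) topology" where
  "loop_top X x0 = topology_generated_by
     {{g \<in> loop_space X x0. g ` K \<subseteq> U} | K U.
        compactin (top_of_set {0..1}) K \<and> openin X U}"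

definition path_homotopic :: "'a topology \<Rightarrow> 'a \<Rightarrow> (real \<Rightarrow> 'a) \<Rightarrow> (real \<Rightarrow> 'a) \<Rightarrow> bool" where
  "path_homotopic X x0 g h \<longleftrightarrow>
     homotopic_with (\<lambda>k. k 0 = x0 \<and> k 1 = x0) (top_of_set {0..1}) X g h"

definition loop_class :: "'a topology \<Rightarrow> 'a \<Rightarrow> (real \<Rightarrow> 'a) \<Rightarrow> (real \<Rightarrow> 'a) set" where
  "loop_class X x0 g = {h \<in> loop_space X x0. path_homotopic X x0 g h}"

definition loop_concat :: "(real \<Rightarrow> 'a) \<Rightarrow> (real \<Rightarrow> 'a) \<Rightarrow> real \<Rightarrow> 'a" where
  "loop_concat g h = (\<lambda>t. if t \<le> 1/2 then g (2 * t) else h (2 * t - 1))"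

definition fund_group :: "'a topology \<Rightarrow> 'a \<Rightarrow> (real \<Rightarrow> 'a) set monoid" where
  "fund_group X x0 = \<lparr> carrier = loop_class X x0 ` loop_space X x0,
     mult = (\<lambda>A B. loop_class X x0 (loop_concat (SOME g. g \<in> A) (SOME h. h \<in> B))),
     one = loop_class X x0 (\<lambda>t. x0) \<rparr>"

definition fund_group_qtop :: "'a topology \<Rightarrow> 'a \<Rightarrow> (real \<Rightarrow> 'a) set topology" where
  "fund_group_qtop X x0 = quot_top (loop_top X x0) (loop_class X x0) (carrier (fund_group X x0))"

end

theory Submission
  imports Defs
begin


definition cancels :: "'a \<times> bool \<Rightarrow> 'a \<times> bool \<Rightarrow> bool" where
  "cancels l m \<longleftrightarrow> fst l = fst m \<and> snd l \<noteq> snd m"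

lemma red_cons_Cons: "red_cons l (m # ys) = (if cancels l m then ys else l # m # ys)"
  by (simp add: cancels_def)

declare red_cons.simps(2)[simp del]

lemma reduced_Nil [simp]: "reduced_word []"
  by (simp add: reduced_word_def)

lemma reduced_single [simp]: "reduced_word [l]"
  by (simp add: reduced_word_def)

lemma reduced_Cons_Cons: "reduced_word (l # m # ys) \<longleftrightarrow> \<not> cancels l m \<and> reduced_word (m # ys)"
proof
  assume r: "reduced_word (l # m # ys)"
  have "\<not> cancels l m" using r[unfolded reduced_word_def, rule_format, of 0] by (simp add: cancels_def)
  moreover have "reduced_word (m # ys)" unfolding reduced_word_def
  proof (intro allI impI)
    fix i assume "Suc i < length (m # ys)"
    then show "\<not> (fst ((m # ys) ! i) = fst ((m # ys) ! Suc i) \<and> snd ((m # ys) ! i) \<noteq> snd ((m # ys) ! Suc i))"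
      using r[unfolded reduced_word_def, rule_format, of "Suc i"] by simp
  qed
  ultimately show "\<not> cancels l m \<and> reduced_word (m # ys)" by blast
next
  assume a: "\<not> cancels l m \<and> reduced_word (m # ys)"
  show "reduced_word (l # m # ys)" unfolding reduced_word_def
  proof (intro allI impI)
    fix i assume i: "Suc i < length (l # m # ys)"
    show "\<not> (fst ((l # m # ys) ! i) = fst ((l # m # ys) ! Suc i) \<and> snd ((l # m # ys) ! i) \<noteq> snd ((l # m # ys) ! Suc i))"
    proof (cases i)
      case 0 then show ?thesis using a by (simp add: cancels_def)
    next
      case (Suc j) then show ?thesis using a[THEN conjunct2, unfolded reduced_word_def, rule_format, of j] i by simp
    qed
  qed
qed

lemma reduced_tl: "reduced_word (l # ys) \<Longrightarrow> reduced_word ys"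
  by (cases ys) (auto simp: reduced_Cons_Cons)

lemma reduced_red_cons: "reduced_word w \<Longrightarrow> reduced_word (red_cons l w)"
proof (cases w)
  case (Cons m ys)
  assume "reduced_word w"
  then show ?thesis using Cons
    by (auto simp: red_cons_Cons reduced_Cons_Cons dest: reduced_tl)
qed simp

lemma set_red_cons: "fst ` set (red_cons l w) \<subseteq> insert (fst l) (fst ` set w)"
  by (cases w) (auto simp: red_cons_Cons)

definition flip :: "'a \<times> bool \<Rightarrow> 'a \<times> bool" where "flip l = (fst l, \<not> snd l)"

lemma cancels_cancels: "cancels l m \<Longrightarrow> cancels m a \<Longrightarrow> l = a"
  by (cases l; cases m; cases a) (auto simp: cancels_def)

lemma red_cons_cancel:
  assumes "reduced_word z" "cancels l m"
  shows "red_cons l (red_cons m z) = z"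
proof (cases z)
  case Nil then show ?thesis using assms by (simp add: red_cons_Cons)
next
  case (Cons a ys)
  show ?thesis
  proof (cases "cancels m a")
    case True
    then have e: "red_cons m z = ys" "l = a" using Cons cancels_cancels[OF assms(2)] by (auto simp: red_cons_Cons)
    show ?thesis
    proof (cases ys)
      case Nil then show ?thesis using e Cons by simp
    next
      case (Cons b zs)
      then show ?thesis using e \<open>z = a # ys\<close> assms(1) by (auto simp: red_cons_Cons reduced_Cons_Cons)
    qed
  next
    case False
    then show ?thesis using Cons assms by (simp add: red_cons_Cons)
  qed
qed

lemma reduced_foldr: "reduced_word v \<Longrightarrow> reduced_word (foldr red_cons u v)"
  by (induction u) (auto intro: reduced_red_cons)

lemma set_foldr: "fst ` set (foldr red_cons u v) \<subseteq> fst ` set u \<union> fst ` set v"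
proof (induction u)
  case (Cons a u)
  then show ?case using set_red_cons[of a "foldr red_cons u v"] by (simp add: foldr_Cons) blast
qed simp

lemma foldr_red_cons_step:
  assumes "reduced_word w" "reduced_word z"
  shows "foldr red_cons (red_cons l w) z = red_cons l (foldr red_cons w z)"
proof (cases w)
  case Nil then show ?thesis by simp
next
  case (Cons m ys)
  show ?thesis
  proof (cases "cancels l m")
    case True
    have "reduced_word (foldr red_cons ys z)" using assms by (intro reduced_foldr)
    then show ?thesis using True Cons by (simp add: red_cons_Cons red_cons_cancel)
  next
    case False then show ?thesis using Cons by (simp add: red_cons_Cons)
  qed
qed

lemma foldr_assoc:
  assumes "reduced_word x" "reduced_word y" "reduced_word z"
  shows "foldr red_cons (foldr red_cons x y) z = foldr red_cons x (foldr red_cons y z)"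
  using assms(1)
proof (induction x)
  case (Cons l x)
  have rx: "reduced_word x" using Cons.prems by (rule reduced_tl)
  have "foldr red_cons (foldr red_cons (l # x) y) z = red_cons l (foldr red_cons (foldr red_cons x y) z)"
    using assms rx by (simp add: foldr_red_cons_step reduced_foldr)
  also have "\<dots> = foldr red_cons (l # x) (foldr red_cons y z)" using Cons.IH[OF rx] by simp
  finally show ?case .
qed simp

lemma cancels_flip: "cancels (flip l) l"
  by (simp add: cancels_def flip_def)

lemma flip_flip [simp]: "flip (flip l) = l" by (simp add: flip_def)

lemma cancels_flip_iff: "cancels (flip a) (flip b) \<longleftrightarrow> cancels b a"
  by (auto simp: cancels_def flip_def)

lemma inverse_word:
  assumes "reduced_word x"
  shows "foldr red_cons (rev (map flip x)) x = []"
  using assms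
proof (induction x)
  case (Cons l x)
  have rx: "reduced_word x" using Cons.prems by (rule reduced_tl)
  have "foldr red_cons (rev (map flip (l # x))) (l # x) = foldr red_cons (rev (map flip x)) (red_cons (flip l) (l # x))"
    by simp
  also have "red_cons (flip l) (l # x) = x" using cancels_flip[of l] by (simp add: red_cons_Cons)
  finally show ?case using Cons.IH[OF rx] by simp
qed simp

lemma reduced_word_nth: "reduced_word w \<longleftrightarrow> (\<forall>i. Suc i < length w \<longrightarrow> \<not> cancels (w ! i) (w ! Suc i))"
  by (simp add: reduced_word_def cancels_def)

lemma reduced_rev_flip:
  assumes "reduced_word x" shows "reduced_word (rev (map flip x))"
  unfolding reduced_word_nth
proof (intro allI impI)
  fix i assume i: "Suc i < length (rev (map flip x))"
  let ?n = "length x"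
  have "\<not> cancels (x ! (?n - Suc (Suc i))) (x ! Suc (?n - Suc (Suc i)))"
    using assms i unfolding reduced_word_nth by auto
  moreover have "Suc (?n - Suc (Suc i)) = ?n - Suc i" using i by simp
  ultimately show "\<not> cancels (rev (map flip x) ! i) (rev (map flip x) ! Suc i)"
    using i by (simp add: rev_nth cancels_flip_iff)
qed

lemma free_grp_group: "group (free_grp S)"
proof (rule groupI)
  fix x y assume "x \<in> carrier (free_grp S)" "y \<in> carrier (free_grp S)"
  then show "x \<otimes>\<^bsub>free_grp S\<^esub> y \<in> carrier (free_grp S)"
    using set_foldr[of x y] by (simp add: free_grp_def reduced_foldr) blast
next
  show "\<one>\<^bsub>free_grp S\<^esub> \<in> carrier (free_grp S)" by (simp add: free_grp_def)
next
  fix x y z assume "x \<in> carrier (free_grp S)" "y \<in> carrier (free_grp S)" "z \<in> carrier (free_grp S)"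
  then show "x \<otimes>\<^bsub>free_grp S\<^esub> y \<otimes>\<^bsub>free_grp S\<^esub> z = x \<otimes>\<^bsub>free_grp S\<^esub> (y \<otimes>\<^bsub>free_grp S\<^esub> z)"
    by (simp add: free_grp_def foldr_assoc)
next
  fix x assume "x \<in> carrier (free_grp S)"
  then show "\<one>\<^bsub>free_grp S\<^esub> \<otimes>\<^bsub>free_grp S\<^esub> x = x" by (simp add: free_grp_def)
next
  fix x assume x: "x \<in> carrier (free_grp S)"
  show "\<exists>y\<in>carrier (free_grp S). y \<otimes>\<^bsub>free_grp S\<^esub> x = \<one>\<^bsub>free_grp S\<^esub>"
  proof (intro bexI)
    show "rev (map flip x) \<otimes>\<^bsub>free_grp S\<^esub> x = \<one>\<^bsub>free_grp S\<^esub>"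
      using x by (simp add: free_grp_def inverse_word)
    show "rev (map flip x) \<in> carrier (free_grp S)"
      using x by (auto simp: free_grp_def reduced_rev_flip flip_def)
  qed
qed

lemma (in group) mult_epi_Cons:
  "mult_epi G (l # w) = (if snd l then fst l else inv (fst l)) \<otimes> mult_epi G w"
  by (simp add: mult_epi_def)

lemma (in group) mult_epi_closed:
  "fst ` set w \<subseteq> carrier G \<Longrightarrow> mult_epi G w \<in> carrier G"
  by (induction w) (auto simp: mult_epi_Cons, simp add: mult_epi_def)

lemma (in group) mult_epi_red_cons:
  assumes "fst l \<in> carrier G" "fst ` set w \<subseteq> carrier G"
  shows "mult_epi G (red_cons l w) = (if snd l then fst l else inv (fst l)) \<otimes> mult_epi G w"
proof (cases w)
  case Nil then show ?thesis by (simp add: mult_epi_def)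
next
  case (Cons m ys)
  show ?thesis
  proof (cases "cancels l m")
    case True
    have m: "fst m \<in> carrier G" "mult_epi G ys \<in> carrier G" using assms Cons by (auto intro: mult_epi_closed)
    from True have "fst l = fst m" "snd l = (\<not> snd m)" by (auto simp: cancels_def)
    then show ?thesis using True Cons m
      by (cases "snd m") (simp_all add: red_cons_Cons mult_epi_Cons m_assoc[symmetric])
  next
    case False then show ?thesis using Cons by (simp add: red_cons_Cons mult_epi_Cons)
  qed
qed

lemma (in group) mult_epi_foldr:
  assumes "fst ` set u \<subseteq> carrier G" "fst ` set v \<subseteq> carrier G"
  shows "mult_epi G (foldr red_cons u v) = mult_epi G u \<otimes> mult_epi G v"
  using assms(1)
proof (induction u)
  case Nil
  have "mult_epi G [] = \<one>" by (simp add: mult_epi_def)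
  then show ?case using mult_epi_closed[OF assms(2)] by simp
next
  case (Cons l u)
  have fu: "fst ` set (foldr red_cons u v) \<subseteq> carrier G" using set_foldr[of u v] Cons.prems assms(2) by simp blast
  have "mult_epi G (foldr red_cons (l # u) v) = (if snd l then fst l else inv (fst l)) \<otimes> mult_epi G (foldr red_cons u v)"
    using Cons.prems fu by (simp add: mult_epi_red_cons)
  also have "\<dots> = (if snd l then fst l else inv (fst l)) \<otimes> (mult_epi G u \<otimes> mult_epi G v)"
    using Cons by simp
  also have "\<dots> = mult_epi G (l # u) \<otimes> mult_epi G v"
    using Cons.prems assms(2) by (simp add: mult_epi_Cons m_assoc mult_epi_closed)
  finally show ?case .
qed

lemma (in group) mult_epi_hom: "mult_epi G \<in> hom (free_grp (carrier G)) G"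
  by (rule homI) (auto simp: free_grp_def mult_epi_closed mult_epi_foldr)

lemma (in group) mult_epi_group_hom: "group_hom (free_grp (carrier G)) G (mult_epi G)"
  by (simp add: group_hom_def group_hom_axioms_def free_grp_group mult_epi_hom is_group)




lemma quot_top_open:
  "openin (quot_top X f Y) U \<longleftrightarrow> U \<subseteq> Y \<and> openin X {x \<in> topspace X. f x \<in> U}"
proof
  assume "openin (quot_top X f Y) U"
  then have "generate_topology_on {U. U \<subseteq> Y \<and> openin X {x \<in> topspace X. f x \<in> U}} U"
    unfolding quot_top_def by (rule openin_topology_generated_by)
  then show "U \<subseteq> Y \<and> openin X {x \<in> topspace X. f x \<in> U}"
  proof induction
    case Empty show ?case by simp
  next
    case (Int a b)
    have "{x \<in> topspace X. f x \<in> a \<inter> b} = {x \<in> topspace X. f x \<in> a} \<inter> {x \<in> topspace X. f x \<in> b}" by blast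
    then show ?case using Int by (simp add: openin_Int le_infI1)
  next
    case (UN K)
    have "{x \<in> topspace X. f x \<in> \<Union>K} = (\<Union>k\<in>K. {x \<in> topspace X. f x \<in> k})" by blast
    moreover have "openin X (\<Union>k\<in>K. {x \<in> topspace X. f x \<in> k})"
      by (rule openin_Union) (erule imageE, simp add: UN.IH)
    moreover have "\<Union>K \<subseteq> Y" using UN by blast
    ultimately show ?case by simp
  next
    case (Basis s) then show ?case by simp
  qed
next
  assume "U \<subseteq> Y \<and> openin X {x \<in> topspace X. f x \<in> U}"
  then show "openin (quot_top X f Y) U"
    unfolding quot_top_def by (intro topology_generated_by_Basis) simp
qed
abbreviation sig :: "'a \<Rightarrow> ('a \<times> bool) list" where "sig s \<equiv> [(s, True)]"

lemma continuous_map_indiscrete: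
  assumes "f ` topspace X \<subseteq> A"
  shows "continuous_map X (topology_generated_by {A}) f"
proof (rule continuous_on_generated_topo)
  fix U assume "U \<in> {A}"
  then have "f -` U \<inter> topspace X = topspace X" using assms by blast
  then show "openin X (f -` U \<inter> topspace X)" by simp
qed (use assms in simp)

lemma group_topology_indiscrete:
  "group_topology (free_grp S) (topology_generated_by {carrier (free_grp S)})"
proof -
  interpret F: group "free_grp S" by (rule free_grp_group)
  show ?thesis unfolding group_topology_def
    by (intro conjI continuous_map_indiscrete) auto
qed

lemma sig_carrier: "s \<in> S \<Longrightarrow> sig s \<in> carrier (free_grp S)"
  by (simp add: free_grp_def)

lemma free_top_facts:
  shows "topspace (free_top X) = carrier (free_grp (topspace X))"
    and "\<And>T' U. group_topology (free_grp (topspace X)) T' \<Longrightarrow> continuous_map X T' sig \<Longrightarrow> openin T' U \<Longrightarrow> openin (free_top X) U"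
    and "continuous_map X (free_top X) sig"
proof -
  let ?F = "free_grp (topspace X)"
  define Fam where "Fam = \<Union> {Collect (openin T) | T. group_topology ?F T \<and> continuous_map X T sig}"
  have Fam_iff: "U \<in> Fam \<longleftrightarrow> (\<exists>T. group_topology ?F T \<and> continuous_map X T sig \<and> openin T U)" for U
    unfolding Fam_def by blast
  have ft: "free_top X = topology_generated_by Fam" by (simp add: free_top_def Fam_def)
  let ?I = "topology_generated_by {carrier ?F}"
  have cI: "continuous_map X ?I sig"
    by (rule continuous_map_indiscrete) (auto simp: sig_carrier)
  have gI: "group_topology ?F ?I" by (rule group_topology_indiscrete)
  have "openin ?I (carrier ?F)" by (rule topology_generated_by_Basis) simp
  then have cF: "carrier ?F \<in> Fam"
    unfolding Fam_iff using cI gI by blast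
  have sub: "U \<subseteq> carrier ?F" if "U \<in> Fam" for U
  proof -
    from that have "\<exists>T. group_topology ?F T \<and> continuous_map X T sig \<and> openin T U" by (simp only: Fam_iff)
    then obtain T where T: "group_topology ?F T" "openin T U" by blast
    have "U \<subseteq> topspace T" using T(2) by (rule openin_subset)
    then show "U \<subseteq> carrier ?F" using T(1) unfolding group_topology_def by simp
  qed
  have top: "\<Union> Fam = carrier ?F"
  proof
    show "\<Union> Fam \<subseteq> carrier ?F" using sub by (rule Union_least)
    show "carrier ?F \<subseteq> \<Union> Fam" using cF by (rule Union_upper)
  qed
  then show "topspace (free_top X) = carrier ?F" by (simp add: ft)
  show "openin (free_top X) U" if "group_topology ?F T'" "continuous_map X T' sig" "openin T' U" for T' U
  proof -
    have "U \<in> Fam" unfolding Fam_iff using that by blast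
    then show ?thesis unfolding ft by (rule topology_generated_by_Basis)
  qed
  show "continuous_map X (free_top X) sig"
    unfolding ft
  proof (rule continuous_on_generated_topo)
    fix U assume "U \<in> Fam"
    then have "\<exists>T. group_topology ?F T \<and> continuous_map X T sig \<and> openin T U" by (simp only: Fam_iff)
    then obtain T where "continuous_map X T sig" "openin T U" by blast
    then have "openin X {x \<in> topspace X. sig x \<in> U}" by (rule openin_continuous_map_preimage)
    moreover have "{x \<in> topspace X. sig x \<in> U} = sig -` U \<inter> topspace X" by blast
    ultimately show "openin X (sig -` U \<inter> topspace X)" by simp
  next
    show "sig ` topspace X \<subseteq> \<Union> Fam" unfolding top by (auto intro: sig_carrier)
  qed
qed




context group
begin

lemma cancel_mid: "c \<in> carrier G \<Longrightarrow> z \<in> carrier G \<Longrightarrow> c \<otimes> (inv c \<otimes> z) = z"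
  by (simp add: m_assoc[symmetric])

lemma open_subgroups_tau:
  assumes top: "topspace T = carrier G"
    and trans: "\<forall>g\<in>carrier G. continuous_map T T (\<lambda>x. g \<otimes> x) \<and> continuous_map T T (\<lambda>x. x \<otimes> g)"
    and H: "subgroup H G"
  shows "openin T H \<longleftrightarrow> openin (tau_top G T) H"
proof -
  let ?F = "free_grp (carrier G)"
  let ?E = "mult_epi G"
  interpret F: group ?F by (rule free_grp_group)
  interpret E: group_hom ?F G ?E by (rule mult_epi_group_hom)
  interpret H: subgroup H G by (rule H)
  have FT: "topspace (free_top T) = carrier ?F"
    using free_top_facts(1)[of T] top by simp
  have Esig: "?E (sig s) = s" if "s \<in> carrier G" for s
    using that by (simp add: mult_epi_def)
  have tau: "openin (tau_top G T) U \<longleftrightarrow> U \<subseteq> carrier G \<and> openin (free_top T) {w \<in> carrier ?F. ?E w \<in> U}" for U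
    unfolding tau_top_def quot_top_open FT ..
  show ?thesis
  proof
    assume "openin (tau_top G T) H"
    then have o: "openin (free_top T) {w \<in> carrier ?F. ?E w \<in> H}" using tau by blast
    have "openin T {s \<in> topspace T. sig s \<in> {w \<in> carrier ?F. ?E w \<in> H}}"
      using free_top_facts(3)[of T] o by (rule openin_continuous_map_preimage)
    moreover have "{s \<in> topspace T. sig s \<in> {w \<in> carrier ?F. ?E w \<in> H}} = H"
      using top Esig H.subset by (auto intro: sig_carrier)
    ultimately show "openin T H" by simp
  next
    assume oH: "openin T H"
    define SS where "SS a b = {w \<in> carrier ?F. inv b \<otimes> ?E w \<otimes> a \<in> H}" for a b
    define Sb where "Sb = {SS a b | a b. a \<in> carrier G \<and> b \<in> carrier G}"
    let ?T' = "topology_generated_by Sb"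
    have Sb_open: "openin ?T' (SS a b)" if "a \<in> carrier G" "b \<in> carrier G" for a b
      by (rule topology_generated_by_Basis) (use that in \<open>auto simp: Sb_def\<close>)
    have cov: "\<Union> Sb = carrier ?F"
    proof
      show "\<Union> Sb \<subseteq> carrier ?F" by (auto simp: Sb_def SS_def)
      show "carrier ?F \<subseteq> \<Union> Sb"
      proof
        fix w assume w: "w \<in> carrier ?F"
        then have Ew: "?E w \<in> carrier G" by simp
        have "w \<in> SS \<one> (?E w)" using w Ew by (simp add: SS_def)
        then show "w \<in> \<Union> Sb" unfolding Sb_def using Ew by blast
      qed
    qed
    have topT': "topspace ?T' = carrier ?F" using cov by simp
    have gt: "group_topology ?F ?T'"
      unfolding group_topology_def
    proof (intro conjI)
      show "topspace ?T' = carrier ?F" by (rule topT')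
      show "continuous_map (prod_topology ?T' ?T') ?T' (\<lambda>p. fst p \<otimes>\<^bsub>?F\<^esub> snd p)"
      proof (rule continuous_on_generated_topo)
        fix U assume "U \<in> Sb"
        then obtain a b where ab: "a \<in> carrier G" "b \<in> carrier G" "U = SS a b" unfolding Sb_def by blast
        have eq: "(\<lambda>p. fst p \<otimes>\<^bsub>?F\<^esub> snd p) -` U \<inter> topspace (prod_topology ?T' ?T')
                 = (\<Union>c\<in>carrier G. SS c b \<times> SS a c)"
        proof (intro equalityI subsetI)
          fix z assume z: "z \<in> (\<lambda>p. fst p \<otimes>\<^bsub>?F\<^esub> snd p) -` U \<inter> topspace (prod_topology ?T' ?T')"
          obtain u v where uv: "z = (u, v)" by fastforce
          have u: "u \<in> carrier ?F" and v: "v \<in> carrier ?F" using z uv topT' by auto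
          have Eu: "?E u \<in> carrier G" and Ev: "?E v \<in> carrier G" using u v by auto
          have "inv b \<otimes> ?E (u \<otimes>\<^bsub>?F\<^esub> v) \<otimes> a \<in> H" using z uv ab by (simp add: SS_def)
          then have m: "inv b \<otimes> ?E u \<otimes> (?E v \<otimes> a) \<in> H" using u v Eu Ev ab by (simp add: m_assoc)
          have "u \<in> SS (?E v \<otimes> a) b" using u m by (simp add: SS_def)
          moreover have "v \<in> SS a (?E v \<otimes> a)" using v Ev ab by (simp add: SS_def m_assoc H.one_closed)
          ultimately show "z \<in> (\<Union>c\<in>carrier G. SS c b \<times> SS a c)" using uv Ev ab by blast
        next
          fix z assume "z \<in> (\<Union>c\<in>carrier G. SS c b \<times> SS a c)"
          then obtain c u v where c: "c \<in> carrier G" and uv: "z = (u, v)" and u: "u \<in> SS c b" and v: "v \<in> SS a c" by blast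
          have uc: "u \<in> carrier ?F" and vc: "v \<in> carrier ?F" using u v by (auto simp: SS_def)
          have Eu: "?E u \<in> carrier G" and Ev: "?E v \<in> carrier G" using uc vc by auto
          have "(inv b \<otimes> ?E u \<otimes> c) \<otimes> (inv c \<otimes> ?E v \<otimes> a) \<in> H"
            using u v by (auto simp: SS_def intro: H.m_closed)
          moreover have "(inv b \<otimes> ?E u \<otimes> c) \<otimes> (inv c \<otimes> ?E v \<otimes> a) = inv b \<otimes> ?E (u \<otimes>\<^bsub>?F\<^esub> v) \<otimes> a"
            using Eu Ev ab c uc vc by (simp add: m_assoc cancel_mid)
          ultimately show "z \<in> (\<lambda>p. fst p \<otimes>\<^bsub>?F\<^esub> snd p) -` U \<inter> topspace (prod_topology ?T' ?T')"
            using uv ab uc vc topT' by (simp add: SS_def)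
        qed
        show "openin (prod_topology ?T' ?T') ((\<lambda>p. fst p \<otimes>\<^bsub>?F\<^esub> snd p) -` U \<inter> topspace (prod_topology ?T' ?T'))"
          unfolding eq
          by (rule openin_Union) (auto simp: openin_prod_Times_iff ab Sb_open)
      next
        show "(\<lambda>p. fst p \<otimes>\<^bsub>?F\<^esub> snd p) ` topspace (prod_topology ?T' ?T') \<subseteq> \<Union> Sb"
          using cov topT' by auto
      qed
      show "continuous_map ?T' ?T' (\<lambda>x. inv\<^bsub>?F\<^esub> x)"
      proof (rule continuous_on_generated_topo)
        fix U assume "U \<in> Sb"
        then obtain a b where ab: "a \<in> carrier G" "b \<in> carrier G" "U = SS a b" unfolding Sb_def by blast
        have "(\<lambda>x. inv\<^bsub>?F\<^esub> x) -` U \<inter> topspace ?T' = SS b a"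
        proof (intro equalityI subsetI)
          fix w assume w: "w \<in> (\<lambda>x. inv\<^bsub>?F\<^esub> x) -` U \<inter> topspace ?T'"
          have wc: "w \<in> carrier ?F" using w cov by auto
          then have Ew: "?E w \<in> carrier G" by simp
          have "inv b \<otimes> inv (?E w) \<otimes> a \<in> H" using w ab wc by (simp add: SS_def)
          then have "inv (inv b \<otimes> inv (?E w) \<otimes> a) \<in> H" by (rule H.m_inv_closed)
          moreover have "inv (inv b \<otimes> inv (?E w) \<otimes> a) = inv a \<otimes> ?E w \<otimes> b"
            using ab Ew by (simp add: inv_mult_group m_assoc)
          ultimately show "w \<in> SS b a" using wc by (simp add: SS_def)
        next
          fix w assume w: "w \<in> SS b a"
          then have wc: "w \<in> carrier ?F" by (simp add: SS_def)
          then have Ew: "?E w \<in> carrier G" by simp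
          have "inv a \<otimes> ?E w \<otimes> b \<in> H" using w by (simp add: SS_def)
          then have "inv (inv a \<otimes> ?E w \<otimes> b) \<in> H" by (rule H.m_inv_closed)
          moreover have "inv (inv a \<otimes> ?E w \<otimes> b) = inv b \<otimes> inv (?E w) \<otimes> a"
            using ab Ew by (simp add: inv_mult_group m_assoc)
          ultimately show "w \<in> (\<lambda>x. inv\<^bsub>?F\<^esub> x) -` U \<inter> topspace ?T'"
            using wc ab topT' by (simp add: SS_def)
        qed
        then show "openin ?T' ((\<lambda>x. inv\<^bsub>?F\<^esub> x) -` U \<inter> topspace ?T')"
          using Sb_open ab by simp
      next
        show "(\<lambda>x. inv\<^bsub>?F\<^esub> x) ` topspace ?T' \<subseteq> \<Union> Sb" using cov topT' by auto
      qed
    qed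
    have cs: "continuous_map T ?T' sig"
    proof (rule continuous_on_generated_topo)
      fix U assume "U \<in> Sb"
      then obtain a b where ab: "a \<in> carrier G" "b \<in> carrier G" "U = SS a b" unfolding Sb_def by blast
      have "continuous_map T T ((\<lambda>x. inv b \<otimes> x) \<circ> (\<lambda>x. x \<otimes> a))"
        using trans ab by (intro continuous_map_compose) auto
      then have "openin T {x \<in> topspace T. ((\<lambda>x. inv b \<otimes> x) \<circ> (\<lambda>x. x \<otimes> a)) x \<in> H}"
        using oH by (rule openin_continuous_map_preimage)
      moreover have "{x \<in> topspace T. ((\<lambda>x. inv b \<otimes> x) \<circ> (\<lambda>x. x \<otimes> a)) x \<in> H} = sig -` U \<inter> topspace T"
        using ab top by (auto simp: SS_def Esig m_assoc sig_carrier)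
      ultimately show "openin T (sig -` U \<inter> topspace T)" by simp
    next
      show "sig ` topspace T \<subseteq> \<Union> Sb" using cov top by (auto intro: sig_carrier)
    qed
    have "openin ?T' (SS \<one> \<one>)" by (rule Sb_open) auto
    then have "openin (free_top T) (SS \<one> \<one>)"
      using free_top_facts(2)[of T] gt cs top by simp
    moreover have "SS \<one> \<one> = {w \<in> carrier ?F. ?E w \<in> H}" by (auto simp: SS_def)
    ultimately show "openin (tau_top G T) H" using tau H.subset by simp
  qed
qed

end




lemma comp_eu:
  assumes "continuous_map (top_of_set T) X g" "continuous_on S \<phi>" "\<phi> ` S \<subseteq> T"
  shows "continuous_map (top_of_set S) X (\<lambda>x. g (\<phi> x))"
proof -
  have "continuous_map (top_of_set S) (top_of_set T) \<phi>" using assms(2,3) by auto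
  from continuous_map_compose[OF this assms(1)] show ?thesis by (simp add: o_def)
qed

lemma paste:
  fixes p :: "'b::topological_space \<Rightarrow> real"
  assumes "continuous_on S p"
    and "continuous_map (top_of_set {x\<in>S. p x \<le> c}) X f"
    and "continuous_map (top_of_set {x\<in>S. c \<le> p x}) X g"
    and "\<And>x. x \<in> S \<Longrightarrow> p x = c \<Longrightarrow> f x = g x"
  shows "continuous_map (top_of_set S) X (\<lambda>x. if p x \<le> c then f x else g x)"
proof (rule continuous_map_cases_le)
  show "continuous_map (top_of_set S) euclideanreal p" using assms(1) by simp
  show "continuous_map (top_of_set S) euclideanreal (\<lambda>x. c)" by simp
  have "subtopology (top_of_set S) {x \<in> topspace (top_of_set S). p x \<le> c} = top_of_set {x\<in>S. p x \<le> c}"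
    by (simp add: subtopology_subtopology Int_def)
  then show "continuous_map (subtopology (top_of_set S) {x \<in> topspace (top_of_set S). p x \<le> c}) X f"
    using assms(2) by simp
  have "subtopology (top_of_set S) {x \<in> topspace (top_of_set S). c \<le> p x} = top_of_set {x\<in>S. c \<le> p x}"
    by (simp add: subtopology_subtopology Int_def)
  then show "continuous_map (subtopology (top_of_set S) {x \<in> topspace (top_of_set S). c \<le> p x}) X g"
    using assms(3) by simp
next
  show "\<And>x. x \<in> topspace (top_of_set S) \<Longrightarrow> p x = c \<Longrightarrow> f x = g x" using assms(4) by simp
qed

lemma pathin_top: "pathin X g \<longleftrightarrow> continuous_map (top_of_set {0..1}) X g"
  by (simp add: pathin_def)

context
  fixes X :: "'a topology" and x0 :: 'a
begin

abbreviation "\<Omega> \<equiv> loop_space X x0"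
abbreviation "PH \<equiv> path_homotopic X x0"
abbreviation "qc \<equiv> loop_class X x0"

lemma PH_def': "PH g h \<longleftrightarrow> homotopic_with (\<lambda>k. k 0 = x0 \<and> k 1 = x0) (top_of_set {0..1}) X g h"
  by (simp add: path_homotopic_def)

lemma PH_refl: "g \<in> \<Omega> \<Longrightarrow> PH g g"
  by (simp add: PH_def' loop_space_def pathin_def)

lemma PH_sym: "PH g h \<Longrightarrow> PH h g"
  by (simp add: PH_def' homotopic_with_sym)

lemma PH_trans: "PH g h \<Longrightarrow> PH h k \<Longrightarrow> PH g k"
  unfolding PH_def' by (rule homotopic_with_trans)

lemma PH_loops: "PH g h \<Longrightarrow> g \<in> \<Omega> \<and> h \<in> \<Omega>"
proof -
  assume a: "PH g h"
  note b = homotopic_with_imp_continuous_maps[OF a[unfolded PH_def']]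
  note c = homotopic_with_imp_property[OF a[unfolded PH_def']]
  show ?thesis using b c by (simp add: loop_space_def pathin_def)
qed

lemma qc_self: "g \<in> \<Omega> \<Longrightarrow> g \<in> qc g"
  by (simp add: loop_class_def PH_refl)

lemma qc_eq: "g \<in> \<Omega> \<Longrightarrow> h \<in> \<Omega> \<Longrightarrow> qc g = qc h \<longleftrightarrow> PH g h"
proof
  assume g: "g \<in> \<Omega>" and h: "h \<in> \<Omega>" and e: "qc g = qc h"
  have "h \<in> qc g" using e qc_self[OF h] by simp
  then show "PH g h" by (simp add: loop_class_def)
next
  assume g: "g \<in> \<Omega>" and h: "h \<in> \<Omega>" and p: "PH g h"
  show "qc g = qc h"
    unfolding loop_class_def using p PH_sym PH_trans by blast
qed

lemma qc_eqI: "PH g h \<Longrightarrow> qc g = qc h"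
  using PH_loops qc_eq by blast

lemma PH_cong:
  assumes "PH f g" "\<And>t. t \<in> {0..1} \<Longrightarrow> f' t = f t" "\<And>t. t \<in> {0..1} \<Longrightarrow> g' t = g t"
  shows "PH f' g'"
  unfolding PH_def'
  by (rule homotopic_with_eq[OF assms(1)[unfolded PH_def']]) (use assms(2,3) in auto)

lemma concat_loop:
  assumes "g \<in> \<Omega>" "h \<in> \<Omega>"
  shows "loop_concat g h \<in> \<Omega>"
proof -
  have g: "continuous_map (top_of_set {0..1}) X g" and h: "continuous_map (top_of_set {0..1}) X h"
    using assms by (auto simp: loop_space_def pathin_def)
  have "continuous_map (top_of_set {0..1}) X (\<lambda>t. if t \<le> 1/2 then g (2 * t) else h (2 * t - 1))"
  proof (rule paste)
    show "continuous_map (top_of_set {x \<in> {0..1}. x \<le> 1/2}) X (\<lambda>t. g (2 * t))"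
      by (rule comp_eu[OF g]) (auto intro!: continuous_intros)
    show "continuous_map (top_of_set {x \<in> {0..1}. 1/2 \<le> x}) X (\<lambda>t. h (2 * t - 1))"
      by (rule comp_eu[OF h]) (auto intro!: continuous_intros)
  next
    fix t :: real assume "t = 1/2"
    then have "2 * t = 1" "2 * t - 1 = 0" by auto
    then show "g (2 * t) = h (2 * t - 1)" using assms by (simp add: loop_space_def)
  qed (auto intro!: continuous_intros)
  then show ?thesis using assms by (auto simp: loop_space_def pathin_def loop_concat_def)
qed


lemma concat_PH:
  assumes "PH a a'" "PH b b'"
  shows "PH (loop_concat a b) (loop_concat a' b')"
proof -
  obtain ha :: "real \<times> real \<Rightarrow> 'a" where ha: "continuous_map (top_of_set ({0..1} \<times> {0..1})) X ha"
      "\<forall>x. ha (0, x) = a x" "\<forall>x. ha (1, x) = a' x" "\<forall>t\<in>{0..1}. ha (t, 0) = x0 \<and> ha (t, 1) = x0"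
    using assms(1) unfolding PH_def' homotopic_with_def prod_topology_subtopology_eu by blast
  obtain hb :: "real \<times> real \<Rightarrow> 'a" where hb: "continuous_map (top_of_set ({0..1} \<times> {0..1})) X hb"
      "\<forall>x. hb (0, x) = b x" "\<forall>x. hb (1, x) = b' x" "\<forall>t\<in>{0..1}. hb (t, 0) = x0 \<and> hb (t, 1) = x0"
    using assms(2) unfolding PH_def' homotopic_with_def prod_topology_subtopology_eu by blast
  define k where "k = (\<lambda>z::real\<times>real. if snd z \<le> 1/2 then ha (fst z, 2 * snd z) else hb (fst z, 2 * snd z - 1))"
  have "continuous_map (top_of_set ({0..1} \<times> {0..1})) X k"
    unfolding k_def
  proof (rule paste)
    show "continuous_map (top_of_set {x \<in> {0..1} \<times> {0..1}. snd x \<le> 1/2}) X (\<lambda>z. ha (fst z, 2 * snd z))"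
      by (rule comp_eu[OF ha(1)]) (auto intro!: continuous_intros)
    show "continuous_map (top_of_set {x \<in> {0..1} \<times> {0..1}. 1/2 \<le> snd x}) X (\<lambda>z. hb (fst z, 2 * snd z - 1))"
      by (rule comp_eu[OF hb(1)]) (auto intro!: continuous_intros)
  next
    fix z :: "real \<times> real" assume z: "z \<in> {0..1} \<times> {0..1}" "snd z = 1/2"
    then have "2 * snd z = 1" "2 * snd z - 1 = 0" by auto
    moreover have "fst z \<in> {0..1}" using z by auto
    ultimately show "ha (fst z, 2 * snd z) = hb (fst z, 2 * snd z - 1)" using ha(4) hb(4) by simp
  qed (auto intro!: continuous_intros)
  moreover have "\<forall>x. k (0, x) = loop_concat a b x" using ha hb by (simp add: k_def loop_concat_def)
  moreover have "\<forall>x. k (1, x) = loop_concat a' b' x" using ha hb by (simp add: k_def loop_concat_def)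
  moreover have "\<forall>t\<in>{0..1}. k (t, 0) = x0 \<and> k (t, 1) = x0" using ha hb by (simp add: k_def)
  ultimately show ?thesis unfolding PH_def' homotopic_with_def by auto
qed

lemma conv01:
  fixes s a b :: real
  assumes "s \<in> {0..1}" "a \<in> {0..1}" "b \<in> {0..1}"
  shows "(1 - s) * a + s * b \<in> {0..1}"
proof -
  have "(1 - s) * a \<le> 1 - s" using assms by (simp add: mult_left_le)
  moreover have "s * b \<le> s" using assms by (simp add: mult_left_le)
  ultimately show ?thesis using assms by auto
qed

lemma reparam_PH:
  assumes g: "g \<in> \<Omega>"
    and c: "continuous_on {0..1} \<phi>" "continuous_on {0..1} \<phi>'"
    and im: "\<phi> ` {0..1} \<subseteq> {0..1}" "\<phi>' ` {0..1} \<subseteq> {0..1}"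
    and e: "\<phi> 0 = \<phi>' 0" "\<phi> 1 = \<phi>' 1" "g (\<phi> 0) = x0" "g (\<phi> 1) = x0"
  shows "PH (\<lambda>t. g (\<phi> t)) (\<lambda>t. g (\<phi>' t))"
proof -
  have gc: "continuous_map (top_of_set {0..1}) X g" using g by (simp add: loop_space_def pathin_def)
  define k where "k = (\<lambda>z::real\<times>real. g ((1 - fst z) * \<phi> (snd z) + fst z * \<phi>' (snd z)))"
  have "continuous_map (top_of_set ({0..1} \<times> {0..1})) X k"
    unfolding k_def
  proof (rule comp_eu[OF gc])
    have c1: "continuous_on ({0..1} \<times> {0..1}) (\<lambda>z::real\<times>real. \<phi> (snd z))"
      by (rule continuous_on_compose2[OF c(1) continuous_on_snd]) auto
    have c2: "continuous_on ({0..1} \<times> {0..1}) (\<lambda>z::real\<times>real. \<phi>' (snd z))"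
      by (rule continuous_on_compose2[OF c(2) continuous_on_snd]) auto
    show "continuous_on ({0..1} \<times> {0..1}) (\<lambda>z. (1 - fst z) * \<phi> (snd z) + fst z * \<phi>' (snd z))"
      by (intro continuous_intros c1 c2)
    show "(\<lambda>z. (1 - fst z) * \<phi> (snd z) + fst z * \<phi>' (snd z)) ` ({0..1} \<times> {0..1}) \<subseteq> {0..1}"
    proof
      fix y assume "y \<in> (\<lambda>z. (1 - fst z) * \<phi> (snd z) + fst z * \<phi>' (snd z)) ` ({0..1} \<times> {0..1})"
      then obtain s t where st: "s \<in> {0..1}" "t \<in> {0..1}" "y = (1 - s) * \<phi> t + s * \<phi>' t" by auto
      have "\<phi> t \<in> {0..1}" "\<phi>' t \<in> {0..1}" using im st(2) by (meson image_subset_iff)+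
      then show "y \<in> {0..1}" using conv01 st by simp
    qed
  qed
  moreover have "\<forall>x. k (0, x) = g (\<phi> x)" by (simp add: k_def)
  moreover have "\<forall>x. k (1, x) = g (\<phi>' x)" by (simp add: k_def)
  moreover have "\<forall>t\<in>{0..1}. k (t, 0) = x0 \<and> k (t, 1) = x0"
  proof
    fix t :: real
    have "(1 - t) * \<phi> 0 + t * \<phi>' 0 = \<phi> 0" "(1 - t) * \<phi> 1 + t * \<phi>' 1 = \<phi> 1"
      using e by (auto simp: algebra_simps)
    then show "k (t, 0) = x0 \<and> k (t, 1) = x0" using e by (simp add: k_def)
  qed
  ultimately show ?thesis unfolding PH_def' homotopic_with_def by auto
qed


lemma const_loop: "x0 \<in> topspace X \<Longrightarrow> (\<lambda>t. x0) \<in> \<Omega>"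
  by (simp add: loop_space_def)

lemma rev_loop: "g \<in> \<Omega> \<Longrightarrow> (\<lambda>t. g (1 - t)) \<in> \<Omega>"
proof -
  assume g: "g \<in> \<Omega>"
  have gc: "continuous_map (top_of_set {0..1}) X g" using g by (simp add: loop_space_def pathin_def)
  have "continuous_map (top_of_set {0..1}) X (\<lambda>t. g (1 - t))"
    by (rule comp_eu[OF gc]) (auto intro!: continuous_intros)
  then show ?thesis using g by (simp add: loop_space_def pathin_def)
qed

lemma right_unit_PH:
  assumes g: "g \<in> \<Omega>"
  shows "PH (loop_concat g (\<lambda>t. x0)) g"
proof -
  have "PH (\<lambda>t. g (min (2 * t) 1)) (\<lambda>t. g t)"
    by (rule reparam_PH[OF g]) (use g in \<open>auto simp: loop_space_def intro!: continuous_intros\<close>)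
  then show ?thesis
  proof (rule PH_cong)
    fix t :: real assume "t \<in> {0..1}"
    show "loop_concat g (\<lambda>t. x0) t = g (min (2 * t) 1)"
      using g by (cases "t \<le> 1/2") (auto simp: loop_concat_def loop_space_def min_def)
  qed simp
qed

lemma left_unit_PH:
  assumes g: "g \<in> \<Omega>"
  shows "PH (loop_concat (\<lambda>t. x0) g) g"
proof -
  have "PH (\<lambda>t. g (max 0 (2 * t - 1))) (\<lambda>t. g t)"
    by (rule reparam_PH[OF g]) (use g in \<open>auto simp: loop_space_def intro!: continuous_intros\<close>)
  then show ?thesis
  proof (rule PH_cong)
    fix t :: real assume "t \<in> {0..1}"
    show "loop_concat (\<lambda>t. x0) g t = g (max 0 (2 * t - 1))"
    proof (cases "t < 1/2")
      case True then show ?thesis using g by (auto simp: loop_concat_def loop_space_def max_def)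
    next
      case False
      show ?thesis
      proof (cases "t = 1/2")
        case True then show ?thesis using g by (simp add: loop_concat_def loop_space_def)
      next
        case False
        then have "max 0 (2 * t - 1) = 2 * t - 1" "\<not> t \<le> 1/2" using \<open>\<not> t < 1/2\<close> by (auto simp: max_def)
        then show ?thesis by (simp add: loop_concat_def)
      qed
    qed
  qed simp
qed

lemma left_inv_PH:
  assumes g: "g \<in> \<Omega>"
  shows "PH (loop_concat (\<lambda>t. g (1 - t)) g) (\<lambda>t. x0)"
proof -
  have "PH (\<lambda>t. g (\<bar>1 - 2 * t\<bar>)) (\<lambda>t. g ((\<lambda>t. 1) t))"
    by (rule reparam_PH[OF g]) (use g in \<open>auto simp: loop_space_def intro!: continuous_intros\<close>)
  then show ?thesis
  proof (rule PH_cong)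
    fix t :: real assume "t \<in> {0..1}"
    show "loop_concat (\<lambda>t. g (1 - t)) g t = g (\<bar>1 - 2 * t\<bar>)"
      by (cases "t \<le> 1/2") (auto simp: loop_concat_def abs_if)
  next
    fix t :: real assume "t \<in> {0..1}"
    show "x0 = g ((\<lambda>t. 1) t)" using g by (simp add: loop_space_def)
  qed
qed

lemma assoc_PH:
  assumes a: "a \<in> \<Omega>" and b: "b \<in> \<Omega>" and c: "c \<in> \<Omega>"
  shows "PH (loop_concat (loop_concat a b) c) (loop_concat a (loop_concat b c))"
proof -
  let ?R = "loop_concat a (loop_concat b c)"
  have R: "?R \<in> \<Omega>" using a b c by (intro concat_loop)
  define \<phi> where "\<phi> = (\<lambda>t::real. min (2 * t) (min (t + 1/4) ((t + 1) / 2)))"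
  have cphi: "continuous_on {0..1} \<phi>" unfolding \<phi>_def by (intro continuous_intros) auto
  have iphi: "\<phi> ` {0..1} \<subseteq> {0..1}" by (auto simp: \<phi>_def min_def)
  have "\<phi> 0 = 0" "\<phi> 1 = 1" by (auto simp: \<phi>_def min_def)
  then have "PH (\<lambda>t. ?R (\<phi> t)) (\<lambda>t. ?R ((\<lambda>t. t) t))"
    using R by (intro reparam_PH[OF R cphi _ iphi]) (auto simp: loop_space_def intro!: continuous_intros)
  then show ?thesis
  proof (rule PH_cong)
    fix t :: real assume t: "t \<in> {0..1}"
    show "loop_concat (loop_concat a b) c t = ?R (\<phi> t)"
    proof (cases "t \<le> 1/4")
      case True
      then have "\<phi> t = 2 * t" by (simp add: \<phi>_def min_def)
      then show ?thesis using True by (simp add: loop_concat_def)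
    next
      case f1: False
      show ?thesis
      proof (cases "t \<le> 1/2")
        case True
        then have "\<phi> t = t + 1/4" using f1 by (simp add: \<phi>_def min_def)
        moreover have "2 * (2 * (t + 1/4) - 1) = 2 * (2 * t) - 1" by (simp add: algebra_simps)
        ultimately show ?thesis using True f1 by (simp add: loop_concat_def)
      next
        case False
        then have "\<phi> t = (t + 1) / 2" using f1 by (simp add: \<phi>_def min_def)
        moreover have "4 * \<phi> t - 3 = 2 * t - 1" "2 * \<phi> t - 1 = t" using \<open>\<phi> t = (t + 1) / 2\<close> by (simp_all add: algebra_simps)
        ultimately show ?thesis using False f1 by (simp add: loop_concat_def)
      qed
    qed
  qed simp
qed


abbreviation "FG \<equiv> fund_group X x0"

lemma some_rep:
  assumes "g \<in> \<Omega>"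
  shows "(SOME h. h \<in> qc g) \<in> \<Omega> \<and> PH g (SOME h. h \<in> qc g)"
proof -
  have "(SOME h. h \<in> qc g) \<in> qc g" using qc_self[OF assms] by (rule someI[where P="\<lambda>h. h \<in> qc g"])
  then show ?thesis by (simp add: loop_class_def)
qed

lemma mult_class:
  assumes "g \<in> \<Omega>" "h \<in> \<Omega>"
  shows "qc g \<otimes>\<^bsub>FG\<^esub> qc h = qc (loop_concat g h)"
proof -
  have "qc g \<otimes>\<^bsub>FG\<^esub> qc h = qc (loop_concat (SOME a. a \<in> qc g) (SOME b. b \<in> qc h))"
    by (simp add: fund_group_def)
  also have "\<dots> = qc (loop_concat g h)"
  proof (rule qc_eqI, rule PH_sym, rule concat_PH)
    show "PH g (SOME a. a \<in> qc g)" using some_rep[OF assms(1)] by blast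
    show "PH h (SOME a. a \<in> qc h)" using some_rep[OF assms(2)] by blast
  qed
  finally show ?thesis .
qed

lemma carrier_FG: "carrier FG = qc ` \<Omega>"
  by (simp add: fund_group_def)

lemma one_FG: "\<one>\<^bsub>FG\<^esub> = qc (\<lambda>t. x0)"
  by (simp add: fund_group_def)

lemma group_FG:
  assumes x0: "x0 \<in> topspace X"
  shows "group FG"
proof (rule groupI)
  fix A B assume "A \<in> carrier FG" "B \<in> carrier FG"
  then obtain g h where "g \<in> \<Omega>" "h \<in> \<Omega>" "A = qc g" "B = qc h" by (auto simp: carrier_FG)
  then show "A \<otimes>\<^bsub>FG\<^esub> B \<in> carrier FG" by (simp add: mult_class carrier_FG concat_loop)
next
  show "\<one>\<^bsub>FG\<^esub> \<in> carrier FG" using const_loop[OF x0] by (simp add: one_FG carrier_FG)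
next
  fix A B C assume "A \<in> carrier FG" "B \<in> carrier FG" "C \<in> carrier FG"
  then obtain a b c where abc: "a \<in> \<Omega>" "b \<in> \<Omega>" "c \<in> \<Omega>" "A = qc a" "B = qc b" "C = qc c"
    by (auto simp: carrier_FG)
  have "qc (loop_concat (loop_concat a b) c) = qc (loop_concat a (loop_concat b c))"
    using abc by (intro qc_eqI assoc_PH)
  then show "A \<otimes>\<^bsub>FG\<^esub> B \<otimes>\<^bsub>FG\<^esub> C = A \<otimes>\<^bsub>FG\<^esub> (B \<otimes>\<^bsub>FG\<^esub> C)"
    using abc by (simp add: mult_class concat_loop)
next
  fix A assume "A \<in> carrier FG"
  then obtain g where g: "g \<in> \<Omega>" "A = qc g" by (auto simp: carrier_FG)
  have "qc (loop_concat (\<lambda>t. x0) g) = qc g" using g by (intro qc_eqI left_unit_PH)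
  then show "\<one>\<^bsub>FG\<^esub> \<otimes>\<^bsub>FG\<^esub> A = A"
    using const_loop[OF x0] g by (simp add: one_FG mult_class)
next
  fix A assume "A \<in> carrier FG"
  then obtain g where g: "g \<in> \<Omega>" "A = qc g" by (auto simp: carrier_FG)
  show "\<exists>B\<in>carrier FG. B \<otimes>\<^bsub>FG\<^esub> A = \<one>\<^bsub>FG\<^esub>"
  proof
    show "qc (\<lambda>t. g (1 - t)) \<in> carrier FG" using rev_loop[OF g(1)] by (simp add: carrier_FG)
    show "qc (\<lambda>t. g (1 - t)) \<otimes>\<^bsub>FG\<^esub> A = \<one>\<^bsub>FG\<^esub>"
    proof -
      have "qc (loop_concat (\<lambda>t. g (1 - t)) g) = qc (\<lambda>t. x0)" using g by (intro qc_eqI left_inv_PH)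
      then show ?thesis using g rev_loop[OF g(1)] by (simp add: one_FG mult_class)
    qed
  qed
qed


abbreviation "LTop \<equiv> loop_top X x0"

definition SB where "SB = {{g \<in> \<Omega>. g ` K \<subseteq> U} | K U. compactin (top_of_set {0..1}) K \<and> openin X U}"

lemma LT_eq: "LTop = topology_generated_by SB"
  by (simp add: loop_top_def SB_def)

lemma top_LT: "topspace LTop = \<Omega>"
proof -
  have "\<Union> SB \<subseteq> \<Omega>" by (auto simp: SB_def)
  moreover have "\<Omega> \<in> SB"
  proof -
    have "\<Omega> = {g \<in> \<Omega>. g ` {} \<subseteq> topspace X}" by simp
    then show ?thesis unfolding SB_def by blast
  qed
  ultimately have "\<Union> SB = \<Omega>" by blast
  then show ?thesis by (simp add: LT_eq)
qed

lemma image_concat: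
  assumes "a \<in> \<Omega>" "b \<in> \<Omega>"
  shows "loop_concat a b ` K \<subseteq> U \<longleftrightarrow>
     a ` ((\<lambda>t. 2 * t) ` (K \<inter> {..1/2})) \<subseteq> U \<and> b ` ((\<lambda>t. 2 * t - 1) ` (K \<inter> {1/2..})) \<subseteq> U"
proof
  assume L: "loop_concat a b ` K \<subseteq> U"
  have "a (2 * t) \<in> U" if "t \<in> K" "t \<le> 1/2" for t
    using L that by (force simp: loop_concat_def)
  moreover have "b (2 * t - 1) \<in> U" if "t \<in> K" "1/2 \<le> t" for t
  proof (cases "t = 1/2")
    case True
    have "loop_concat a b t = b (2 * t - 1)" unfolding True using assms by (simp add: loop_concat_def loop_space_def)
    then show ?thesis using L that by force
  next
    case False
    then have "loop_concat a b t = b (2 * t - 1)" using that by (simp add: loop_concat_def)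
    then show ?thesis using L that by force
  qed
  ultimately show "a ` ((\<lambda>t. 2 * t) ` (K \<inter> {..1/2})) \<subseteq> U \<and> b ` ((\<lambda>t. 2 * t - 1) ` (K \<inter> {1/2..})) \<subseteq> U"
    by auto
next
  assume R: "a ` ((\<lambda>t. 2 * t) ` (K \<inter> {..1/2})) \<subseteq> U \<and> b ` ((\<lambda>t. 2 * t - 1) ` (K \<inter> {1/2..})) \<subseteq> U"
  show "loop_concat a b ` K \<subseteq> U"
  proof
    fix y assume "y \<in> loop_concat a b ` K"
    then obtain t where t: "t \<in> K" "y = loop_concat a b t" by auto
    show "y \<in> U"
    proof (cases "t \<le> 1/2")
      case True then show ?thesis using R t by (auto simp: loop_concat_def)
    next
      case False then show ?thesis using R t by (auto simp: loop_concat_def)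
    qed
  qed
qed

lemma compact_pieces:
  assumes "compactin (top_of_set {0..1}) K"
  shows "compactin (top_of_set {0..1}) ((\<lambda>t::real. 2 * t) ` (K \<inter> {..1/2}))"
    and "compactin (top_of_set {0..1}) ((\<lambda>t::real. 2 * t - 1) ` (K \<inter> {1/2..}))"
proof -
  have K: "compact K" "K \<subseteq> {0..1}" using assms by (auto simp: compactin_subtopology)
  have c1: "compact (K \<inter> {..1/2})" using K by (intro compact_Int_closed) auto
  have c2: "compact (K \<inter> {1/2..})" using K by (intro compact_Int_closed) auto
  have "compact ((\<lambda>t::real. 2 * t) ` (K \<inter> {..1/2}))"
    by (rule compact_continuous_image[OF _ c1]) (intro continuous_intros)
  moreover have "(\<lambda>t::real. 2 * t) ` (K \<inter> {..1/2}) \<subseteq> {0..1}" using K by auto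
  ultimately show "compactin (top_of_set {0..1}) ((\<lambda>t::real. 2 * t) ` (K \<inter> {..1/2}))"
    by (simp add: compactin_subtopology)
  have "compact ((\<lambda>t::real. 2 * t - 1) ` (K \<inter> {1/2..}))"
    by (rule compact_continuous_image[OF _ c2]) (intro continuous_intros)
  moreover have "(\<lambda>t::real. 2 * t - 1) ` (K \<inter> {1/2..}) \<subseteq> {0..1}" using K by auto
  ultimately show "compactin (top_of_set {0..1}) ((\<lambda>t::real. 2 * t - 1) ` (K \<inter> {1/2..}))"
    by (simp add: compactin_subtopology)
qed

lemma SB_open: "compactin (top_of_set {0..1}) K \<Longrightarrow> openin X U \<Longrightarrow> openin LTop {g \<in> \<Omega>. g ` K \<subseteq> U}"
  unfolding LT_eq by (rule topology_generated_by_Basis) (auto simp: SB_def)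

lemma top_SB: "topspace (topology_generated_by SB) = \<Omega>"
  using top_LT by (simp add: LT_eq)

lemma LT_cont:
  assumes a: "a \<in> \<Omega>"
  shows "continuous_map LTop LTop (\<lambda>b. loop_concat a b)" and "continuous_map LTop LTop (\<lambda>b. loop_concat b a)"
proof -
  have "continuous_map (topology_generated_by SB) (topology_generated_by SB) (\<lambda>b. loop_concat a b)"
  proof (rule continuous_on_generated_topo)
    fix V assume "V \<in> SB"
    then obtain K U where KU: "compactin (top_of_set {0..1}) K" "openin X U" "V = {g \<in> \<Omega>. g ` K \<subseteq> U}"
      by (auto simp: SB_def)
    let ?A = "(\<lambda>t. 2 * t) ` (K \<inter> {..1/2})" and ?K' = "(\<lambda>t. 2 * t - 1) ` (K \<inter> {1/2..})"
    have e0: "{b \<in> \<Omega>. loop_concat a b \<in> V} = (if a ` ?A \<subseteq> U then {g \<in> \<Omega>. g ` ?K' \<subseteq> U} else {})"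
    proof -
      have "loop_concat a b \<in> V \<longleftrightarrow> a ` ?A \<subseteq> U \<and> b ` ?K' \<subseteq> U" if "b \<in> \<Omega>" for b
        using KU(3) image_concat[OF a that] concat_loop[OF a that] by simp
      then have **: "(b \<in> \<Omega> \<and> loop_concat a b \<in> V) = (b \<in> \<Omega> \<and> a ` ?A \<subseteq> U \<and> b ` ?K' \<subseteq> U)" for b
        by metis
      show ?thesis by (simp only: **) simp
    qed
    have e: "(\<lambda>b. loop_concat a b) -` V \<inter> topspace (topology_generated_by SB)
       = (if a ` ?A \<subseteq> U then {g \<in> \<Omega>. g ` ?K' \<subseteq> U} else {})"
      unfolding top_SB e0[symmetric] by blast
    have "openin (topology_generated_by SB) {g \<in> \<Omega>. g ` ?K' \<subseteq> U}"
      using SB_open[OF compact_pieces(2)[OF KU(1)] KU(2)] by (simp add: LT_eq)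
    then show "openin (topology_generated_by SB) ((\<lambda>b. loop_concat a b) -` V \<inter> topspace (topology_generated_by SB))"
      unfolding e by simp
  next
    show "(\<lambda>b. loop_concat a b) ` topspace (topology_generated_by SB) \<subseteq> \<Union> SB"
      using concat_loop[OF a] top_SB top_LT LT_eq by auto
  qed
  then show "continuous_map LTop LTop (\<lambda>b. loop_concat a b)" by (simp add: LT_eq)
  have "continuous_map (topology_generated_by SB) (topology_generated_by SB) (\<lambda>b. loop_concat b a)"
  proof (rule continuous_on_generated_topo)
    fix V assume "V \<in> SB"
    then obtain K U where KU: "compactin (top_of_set {0..1}) K" "openin X U" "V = {g \<in> \<Omega>. g ` K \<subseteq> U}"
      by (auto simp: SB_def)
    let ?A = "(\<lambda>t. 2 * t - 1) ` (K \<inter> {1/2..})" and ?K' = "(\<lambda>t. 2 * t) ` (K \<inter> {..1/2})"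
    have e0: "{b \<in> \<Omega>. loop_concat b a \<in> V} = (if a ` ?A \<subseteq> U then {g \<in> \<Omega>. g ` ?K' \<subseteq> U} else {})"
    proof -
      have "loop_concat b a \<in> V \<longleftrightarrow> a ` ?A \<subseteq> U \<and> b ` ?K' \<subseteq> U" if "b \<in> \<Omega>" for b
        using KU(3) image_concat[OF that a] concat_loop[OF that a] by (simp add: conj_commute)
      then have **: "(b \<in> \<Omega> \<and> loop_concat b a \<in> V) = (b \<in> \<Omega> \<and> a ` ?A \<subseteq> U \<and> b ` ?K' \<subseteq> U)" for b
        by metis
      show ?thesis by (simp only: **) simp
    qed
    have e: "(\<lambda>b. loop_concat b a) -` V \<inter> topspace (topology_generated_by SB)
       = (if a ` ?A \<subseteq> U then {g \<in> \<Omega>. g ` ?K' \<subseteq> U} else {})"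
      unfolding top_SB e0[symmetric] by blast
    have "openin (topology_generated_by SB) {g \<in> \<Omega>. g ` ?K' \<subseteq> U}"
      using SB_open[OF compact_pieces(1)[OF KU(1)] KU(2)] by (simp add: LT_eq)
    then show "openin (topology_generated_by SB) ((\<lambda>b. loop_concat b a) -` V \<inter> topspace (topology_generated_by SB))"
      unfolding e by simp
  next
    show "(\<lambda>b. loop_concat b a) ` topspace (topology_generated_by SB) \<subseteq> \<Union> SB"
      using concat_loop[OF _ a] top_SB top_LT LT_eq by auto
  qed
  then show "continuous_map LTop LTop (\<lambda>b. loop_concat b a)" by (simp add: LT_eq)
qed


lemma quot_topspace:
  assumes "f ` topspace Z \<subseteq> Y"
  shows "topspace (quot_top Z f Y) = Y"
proof -
  define Fam where "Fam = {U. U \<subseteq> Y \<and> openin Z {x \<in> topspace Z. f x \<in> U}}"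
  have "{x \<in> topspace Z. f x \<in> Y} = topspace Z" using assms by auto
  then have "Y \<in> Fam" by (simp add: Fam_def)
  moreover have "\<Union> Fam \<subseteq> Y" by (auto simp: Fam_def)
  ultimately have "\<Union> Fam = Y" by blast
  then show ?thesis by (simp add: quot_top_def Fam_def)
qed

abbreviation "TQ \<equiv> fund_group_qtop X x0"

lemma TQ_open: "openin TQ U \<longleftrightarrow> U \<subseteq> carrier FG \<and> openin LTop {x \<in> \<Omega>. qc x \<in> U}"
  by (simp add: fund_group_qtop_def quot_top_open top_LT)

lemma top_TQ: "topspace TQ = carrier FG"
  unfolding fund_group_qtop_def by (rule quot_topspace) (auto simp: top_LT carrier_FG)

lemma TQ_translations:
  assumes x0: "x0 \<in> topspace X"
  shows "\<forall>g\<in>carrier FG. continuous_map TQ TQ (\<lambda>A. g \<otimes>\<^bsub>FG\<^esub> A) \<and> continuous_map TQ TQ (\<lambda>A. A \<otimes>\<^bsub>FG\<^esub> g)"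
proof
  interpret FGg: group FG by (rule group_FG[OF x0])
  fix g assume "g \<in> carrier FG"
  then obtain a where a: "a \<in> \<Omega>" "g = qc a" by (auto simp: carrier_FG)
  show "continuous_map TQ TQ (\<lambda>A. g \<otimes>\<^bsub>FG\<^esub> A) \<and> continuous_map TQ TQ (\<lambda>A. A \<otimes>\<^bsub>FG\<^esub> g)"
  proof
    show "continuous_map TQ TQ (\<lambda>A. g \<otimes>\<^bsub>FG\<^esub> A)"
      unfolding continuous_map_def
    proof (intro conjI allI impI)
      show "(\<lambda>A. g \<otimes>\<^bsub>FG\<^esub> A) \<in> topspace TQ \<rightarrow> topspace TQ"
        using \<open>g \<in> carrier FG\<close> by (auto simp: top_TQ)
      fix U assume "openin TQ U"
      then have U: "U \<subseteq> carrier FG" "openin LTop {x \<in> \<Omega>. qc x \<in> U}" by (auto simp: TQ_open)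
      have "openin LTop {b \<in> topspace LTop. loop_concat a b \<in> {x \<in> \<Omega>. qc x \<in> U}}"
        using LT_cont(1)[OF a(1)] U(2) by (rule openin_continuous_map_preimage)
      moreover have "{b \<in> topspace LTop. loop_concat a b \<in> {x \<in> \<Omega>. qc x \<in> U}}
          = {x \<in> \<Omega>. qc x \<in> {A \<in> topspace TQ. g \<otimes>\<^bsub>FG\<^esub> A \<in> U}}"
        using a concat_loop[OF a(1)] mult_class[OF a(1)] by (auto simp: top_LT top_TQ carrier_FG)
      ultimately show "openin TQ {A \<in> topspace TQ. g \<otimes>\<^bsub>FG\<^esub> A \<in> U}"
        by (simp add: TQ_open top_TQ)
    qed
    show "continuous_map TQ TQ (\<lambda>A. A \<otimes>\<^bsub>FG\<^esub> g)"
      unfolding continuous_map_def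
    proof (intro conjI allI impI)
      show "(\<lambda>A. A \<otimes>\<^bsub>FG\<^esub> g) \<in> topspace TQ \<rightarrow> topspace TQ"
        using \<open>g \<in> carrier FG\<close> by (auto simp: top_TQ)
      fix U assume "openin TQ U"
      then have U: "U \<subseteq> carrier FG" "openin LTop {x \<in> \<Omega>. qc x \<in> U}" by (auto simp: TQ_open)
      have "openin LTop {b \<in> topspace LTop. loop_concat b a \<in> {x \<in> \<Omega>. qc x \<in> U}}"
        using LT_cont(2)[OF a(1)] U(2) by (rule openin_continuous_map_preimage)
      moreover have "{b \<in> topspace LTop. loop_concat b a \<in> {x \<in> \<Omega>. qc x \<in> U}}
          = {x \<in> \<Omega>. qc x \<in> {A \<in> topspace TQ. A \<otimes>\<^bsub>FG\<^esub> g \<in> U}}"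
        using a concat_loop[OF _ a(1)] mult_class[OF _ a(1)] by (auto simp: top_LT top_TQ carrier_FG)
      ultimately show "openin TQ {A \<in> topspace TQ. A \<otimes>\<^bsub>FG\<^esub> g \<in> U}"
        by (simp add: TQ_open top_TQ)
    qed
  qed
qed

end

theorem corollary3p9:
  shows "(\<forall>(G :: ('g, 'm) monoid_scheme) (T :: 'g topology). quasitopological_group G T \<longrightarrow>
            (\<forall>H. (subgroup H G \<and> openin T H) \<longleftrightarrow> (subgroup H G \<and> openin (tau_top G T) H)))
       \<and> (\<forall>(X :: 'a topology) x0. x0 \<in> topspace X \<longrightarrow>
            (\<forall>H. (subgroup H (fund_group X x0) \<and> openin (fund_group_qtop X x0) H) \<longleftrightarrow>
                 (subgroup H (fund_group X x0) \<and>
                  openin (tau_top (fund_group X x0) (fund_group_qtop X x0)) H)))"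
proof (intro conjI allI impI)
  fix G :: "('g, 'm) monoid_scheme" and T :: "'g topology" and H
  assume q: "quasitopological_group G T"
  then have g: "group G" and top: "topspace T = carrier G"
    and tr: "\<forall>g\<in>carrier G. continuous_map T T (\<lambda>x. g \<otimes>\<^bsub>G\<^esub> x) \<and> continuous_map T T (\<lambda>x. x \<otimes>\<^bsub>G\<^esub> g)"
    by (auto simp: quasitopological_group_def)
  show "(subgroup H G \<and> openin T H) \<longleftrightarrow> (subgroup H G \<and> openin (tau_top G T) H)"
    using group.open_subgroups_tau[OF g top tr] by blast
next
  fix X :: "'a topology" and x0 H
  assume x0: "x0 \<in> topspace X"
  show "(subgroup H (fund_group X x0) \<and> openin (fund_group_qtop X x0) H) \<longleftrightarrow>
                 (subgroup H (fund_group X x0) \<and>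
                  openin (tau_top (fund_group X x0) (fund_group_qtop X x0)) H)"
    using group.open_subgroups_tau[OF group_FG[OF x0] top_TQ TQ_translations[OF x0]] by blast
qed

end
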